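(* Let $(G,\sigma)$ be a connection graph and $i,j\in V$ distinct fixed vertices. Let $\mathcal{V}_{i\to j}:V\to\mathbb{R}^{d\times d}$ be the connection voltage function, i.e. the unique solution of $(\mathcal{L}\mathcal{V}_{i\to j})(x)=0_{d\times d}$ for $x\in V\setminus\{i,j\}$, $\mathcal{V}_{i\to j}(i)=I_{d\times d}$, $\mathcal{V}_{i\to j}(j)=0_{d\times d}$. Then for every $x\in V$, $$\mathcal{V}_{i\to j}(x)=\mathbb{P}^x[T^0_i<T^0_j]\cdot\Omega^0_{xi}(j).$$
   Context: A connection graph $(G,\sigma)$: finite connected weighted graph $G=(V,E,W)$ with $w_{ij}>0$ iff $\{i,j\}\in E$, $\deg(i)=\sum_j w_{ij}$, and $\sigma$ mapping oriented edges to $\mathsf{O}(d)$ with $\sigma_{ji}=\sigma_{ij}^{\mathrm T}$; $(\mathcal{L}f)(x)=\sum_{y\sim x}w_{xy}(f(x)-\sigma_{xy}f(y))$ for $f:V\to\mathbb{R}^{d\times d}$. $(X_t)$ is the simple random walk with transition probabilities $w_{xy}/\deg(x)$; $\mathbb{P}^x,\mathbb{E}^x$ denote probability/expectation given $X_0=x$; $T^0_k=\inf\{t\ge0:X_t=k\}$. The conditional mean path signature is $\Omega^0_{xi}(j)=\mathbb{E}^x\big[\prod_{\ell=1}^{T^0_i}\sigma_{X_{\ell-1}X_\ell}\mid T^0_i<T^0_j\big]$ (ordered product, empty product $=I_d$). *)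

theory Defs
  imports "HOL-Analysis.Analysis"
begin

text \<open>Vertices form a finite type 'v; matrices are real^'d^'d.
  Weights w :: 'v => 'v => real (w x y > 0 iff {x,y} is an edge, else 0).\<close>

definition connection_graph ::
  "('v::finite \<Rightarrow> 'v \<Rightarrow> real) \<Rightarrow> ('v \<Rightarrow> 'v \<Rightarrow> real^'d::finite^'d) \<Rightarrow> bool" where
  "connection_graph w \<sigma> \<longleftrightarrow>
     (\<forall>x y. w x y \<ge> 0) \<and> (\<forall>x y. w x y = w y x) \<and>
     {(x, y). w x y > 0}\<^sup>* = UNIV \<and>
     (\<forall>x y. orthogonal_matrix (\<sigma> x y)) \<and>
     (\<forall>x y. \<sigma> y x = transpose (\<sigma> x y))"

definition deg :: "('v::finite \<Rightarrow> 'v \<Rightarrow> real) \<Rightarrow> 'v \<Rightarrow> real" where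
  "deg w x = (\<Sum>y\<in>UNIV. w x y)"

definition conn_laplacian ::
  "('v::finite \<Rightarrow> 'v \<Rightarrow> real) \<Rightarrow> ('v \<Rightarrow> 'v \<Rightarrow> real^'d::finite^'d)
    \<Rightarrow> ('v \<Rightarrow> real^'d^'d) \<Rightarrow> 'v \<Rightarrow> real^'d^'d" where
  "conn_laplacian w \<sigma> f x = (\<Sum>y\<in>UNIV. w x y *\<^sub>R (f x - \<sigma> x y ** f y))"

definition trans_prob :: "('v::finite \<Rightarrow> 'v \<Rightarrow> real) \<Rightarrow> 'v \<Rightarrow> 'v \<Rightarrow> real" where
  "trans_prob w x y = w x y / deg w x"

fun path_prob :: "('v::finite \<Rightarrow> 'v \<Rightarrow> real) \<Rightarrow> 'v list \<Rightarrow> real" where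
  "path_prob w (x # y # p) = trans_prob w x y * path_prob w (y # p)"
| "path_prob w _ = 1"

fun path_signature :: "('v \<Rightarrow> 'v \<Rightarrow> real^'d::finite^'d) \<Rightarrow> 'v list \<Rightarrow> real^'d^'d" where
  "path_signature \<sigma> (x # y # p) = \<sigma> x y ** path_signature \<sigma> (y # p)"
| "path_signature \<sigma> _ = mat 1"

text \<open>Initial segments (X_0,...,X_{T_i}) of walks from x on the event T_i < T_j:
  they start at x, end at i, and visit neither i nor j before the last step.\<close>
definition hit_paths :: "'v \<Rightarrow> 'v \<Rightarrow> 'v \<Rightarrow> 'v list set" where
  "hit_paths x i j = {p. p \<noteq> [] \<and> hd p = x \<and> last p = i \<and>
      (\<forall>k < length p - 1. p ! k \<noteq> i \<and> p ! k \<noteq> j)}"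

definition hit_prob :: "('v::finite \<Rightarrow> 'v \<Rightarrow> real) \<Rightarrow> 'v \<Rightarrow> 'v \<Rightarrow> 'v \<Rightarrow> real" where
  "hit_prob w x i j = (\<Sum>\<^sub>\<infinity>p\<in>hit_paths x i j. path_prob w p)"

text \<open>Omega^0_{xi}(j) = E^x[prod sigma | T_i < T_j]
  = E^x[prod sigma ; T_i < T_j] / P^x[T_i < T_j].\<close>
definition cond_mean_signature ::
  "('v::finite \<Rightarrow> 'v \<Rightarrow> real) \<Rightarrow> ('v \<Rightarrow> 'v \<Rightarrow> real^'d::finite^'d) \<Rightarrow> 'v \<Rightarrow> 'v \<Rightarrow> 'v \<Rightarrow> real^'d^'d" where
  "cond_mean_signature w \<sigma> x i j =
     (1 / hit_prob w x i j) *\<^sub>R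
       (\<Sum>\<^sub>\<infinity>p\<in>hit_paths x i j. path_prob w p *\<^sub>R path_signature \<sigma> p)"

end

theory Submission
  imports Defs
begin


lemma hit_paths_i: "hit_paths i i j = {[i]}"
proof -
  { fix p assume p: "p \<in> hit_paths i i j"
    have "p = [i]"
    proof (cases p)
      case Nil then show ?thesis using p by (simp add: hit_paths_def)
    next
      case (Cons a q)
      then have a: "a = i" using p by (simp add: hit_paths_def)
      show ?thesis
      proof (cases q)
        case Nil then show ?thesis using Cons a by simp
      next
        case (Cons b r)
        then show ?thesis using p \<open>p = a # q\<close> a by (auto simp: hit_paths_def dest!: spec[of _ 0])
      qed
    qed }
  then show ?thesis by (auto simp: hit_paths_def)
qed

lemma hit_paths_j: "i \<noteq> j \<Longrightarrow> hit_paths j i j = {}"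
proof -
  assume ij: "i \<noteq> j"
  { fix p assume p: "p \<in> hit_paths j i j"
    have False
    proof (cases p)
      case Nil then show ?thesis using p by (simp add: hit_paths_def)
    next
      case (Cons a q)
      then have a: "a = j" using p by (simp add: hit_paths_def)
      show ?thesis
      proof (cases q)
        case Nil then show ?thesis using Cons a p ij by (simp add: hit_paths_def)
      next
        case (Cons b r)
        then show ?thesis using p \<open>p = a # q\<close> a by (auto simp: hit_paths_def dest!: spec[of _ 0])
      qed
    qed }
  then show ?thesis by auto
qed

lemma hit_paths_step:
  assumes "x \<noteq> i" "x \<noteq> j"
  shows "p \<in> hit_paths x i j \<longleftrightarrow> (\<exists>q. p = x # q \<and> q \<in> hit_paths (hd q) i j)"
proof
  assume p: "p \<in> hit_paths x i j"
  then obtain q where q: "p = x # q" by (cases p) (auto simp: hit_paths_def)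
  have "q \<noteq> []" using p q assms by (auto simp: hit_paths_def)
  moreover have "last q = i" using p q \<open>q \<noteq> []\<close> by (auto simp: hit_paths_def)
  moreover have "\<forall>k < length q - 1. q ! k \<noteq> i \<and> q ! k \<noteq> j"
  proof (intro allI impI)
    fix k assume "k < length q - 1"
    then have "Suc k < length p - 1" using q by simp
    then show "q ! k \<noteq> i \<and> q ! k \<noteq> j" using p q by (auto simp: hit_paths_def)
  qed
  ultimately show "\<exists>q. p = x # q \<and> q \<in> hit_paths (hd q) i j" using q by (auto simp: hit_paths_def)
next
  assume "\<exists>q. p = x # q \<and> q \<in> hit_paths (hd q) i j"
  then obtain q where q: "p = x # q" "q \<in> hit_paths (hd q) i j" by blast
  have "\<forall>k < length p - 1. p ! k \<noteq> i \<and> p ! k \<noteq> j"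
  proof (intro allI impI)
    fix k assume k: "k < length p - 1"
    show "p ! k \<noteq> i \<and> p ! k \<noteq> j"
    proof (cases k)
      case 0 then show ?thesis using q assms by simp
    next
      case (Suc m) then show ?thesis using q k by (auto simp: hit_paths_def)
    qed
  qed
  then show "p \<in> hit_paths x i j" using q by (auto simp: hit_paths_def)
qed

lemma hit_paths_decomp:
  assumes "x \<noteq> i" "x \<noteq> j"
  shows "hit_paths x i j = (\<Union>y. (#) x ` hit_paths y i j)"
  using hit_paths_step[OF assms] by (auto simp: hit_paths_def)

lemma hit_paths_hd: "q \<in> hit_paths y i j \<Longrightarrow> q = y # tl q"
  by (cases q) (auto simp: hit_paths_def)

lemma path_prob_cons: "q \<in> hit_paths y i j \<Longrightarrow> path_prob w (x # q) = trans_prob w x y * path_prob w q"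
  by (subst hit_paths_hd, assumption, simp, subst (2) hit_paths_hd, assumption, simp)

lemma path_sig_cons: "q \<in> hit_paths y i j \<Longrightarrow> path_signature \<sigma> (x # q) = \<sigma> x y ** path_signature \<sigma> q"
  by (subst hit_paths_hd, assumption, simp, subst (2) hit_paths_hd, assumption, simp)



context
  fixes w :: "'v::finite \<Rightarrow> 'v \<Rightarrow> real" and \<sigma> :: "'v \<Rightarrow> 'v \<Rightarrow> real^'d::finite^'d" and i j :: 'v
  assumes cg: "connection_graph w \<sigma>" and ij: "i \<noteq> j"
begin

lemma w_nonneg: "w x y \<ge> 0" using cg by (simp add: connection_graph_def)

lemma deg_pos: "deg w x > 0"
proof -
  obtain z where z: "z \<noteq> x" using ij by metis
  have "(x, z) \<in> {(x, y). w x y > 0}\<^sup>*" using cg by (simp add: connection_graph_def)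
  then obtain y where y: "w x y > 0"
    using z by (cases rule: converse_rtranclE) blast+
  have "w x y \<le> deg w x" unfolding deg_def
    by (rule member_le_sum) (auto simp: w_nonneg)
  then show ?thesis using y by simp
qed

lemma tp_nonneg: "trans_prob w x y \<ge> 0"
  using deg_pos[of x] w_nonneg[of x y] by (simp add: trans_prob_def)

lemma tp_sum: "(\<Sum>y\<in>UNIV. trans_prob w x y) = 1"
proof -
  have "(\<Sum>y\<in>UNIV. trans_prob w x y) = (\<Sum>y\<in>UNIV. w x y) / deg w x"
    unfolding trans_prob_def by (rule sum_divide_distrib[symmetric])
  then show ?thesis using deg_pos[of x] by (simp add: deg_def)
qed

lemma pp_nonneg: "path_prob w p \<ge> 0"
  by (induction p rule: induct_list012) (auto simp: tp_nonneg)

lemma hit_bound: "sum (path_prob w) (hit_paths x i j \<inter> {p. length p \<le> N}) \<le> 1"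
proof (induction N arbitrary: x)
  case 0
  have "hit_paths x i j \<inter> {p. length p \<le> 0} = {}" by (auto simp: hit_paths_def)
  then show ?case by simp
next
  case (Suc N)
  show ?case
  proof (cases "x = i \<or> x = j")
    case True
    then show ?thesis
    proof
      assume "x = i"
      then have "hit_paths x i j \<inter> {p. length p \<le> Suc N} = {[i]}" by (auto simp: hit_paths_i)
      then show ?thesis by simp
    next
      assume "x = j" then show ?thesis using hit_paths_j[OF ij] by simp
    qed
  next
    case False
    let ?B = "\<lambda>y. hit_paths y i j \<inter> {p. length p \<le> N}"
    have eq: "hit_paths x i j \<inter> {p. length p \<le> Suc N} = (\<Union>y\<in>UNIV. (#) x ` ?B y)"
      using hit_paths_decomp[of x i j] False by auto
    have "sum (path_prob w) (\<Union>y\<in>UNIV. (#) x ` ?B y) = (\<Sum>y\<in>UNIV. sum (path_prob w) ((#) x ` ?B y))"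
    proof (rule sum.UNION_disjoint)
      show "\<forall>y\<in>UNIV. finite ((#) x ` ?B y)"
      proof
        fix y
        have "finite {p :: 'v list. set p \<subseteq> UNIV \<and> length p \<le> N}" by (rule finite_lists_length_le) simp
        then show "finite ((#) x ` ?B y)" by (auto intro: finite_subset)
      qed
      show "\<forall>y\<in>UNIV. \<forall>z\<in>UNIV. y \<noteq> z \<longrightarrow> (#) x ` ?B y \<inter> (#) x ` ?B z = {}"
        by (auto simp: hit_paths_def)
    qed simp
    also have "\<dots> = (\<Sum>y\<in>UNIV. trans_prob w x y * sum (path_prob w) (?B y))"
    proof (rule sum.cong)
      fix y
      have "sum (path_prob w) ((#) x ` ?B y) = sum (path_prob w \<circ> (#) x) (?B y)"
        by (rule sum.reindex) simp
      also have "\<dots> = sum (\<lambda>q. trans_prob w x y * path_prob w q) (?B y)"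
        by (rule sum.cong) (auto simp: path_prob_cons)
      finally show "sum (path_prob w) ((#) x ` ?B y) = trans_prob w x y * sum (path_prob w) (?B y)"
        by (simp add: sum_distrib_left)
    qed simp
    also have "\<dots> \<le> (\<Sum>y\<in>UNIV. trans_prob w x y * 1)"
      by (rule sum_mono, rule mult_left_mono) (auto simp: Suc.IH tp_nonneg)
    finally show ?thesis using eq tp_sum by simp
  qed
qed

lemma pp_summable: "path_prob w summable_on hit_paths x i j"
proof (rule nonneg_bdd_above_summable_on)
  show "bdd_above (sum (path_prob w) ` {F. F \<subseteq> hit_paths x i j \<and> finite F})"
  proof (rule bdd_aboveI)
    fix s assume "s \<in> sum (path_prob w) ` {F. F \<subseteq> hit_paths x i j \<and> finite F}"
    then obtain F where F: "F \<subseteq> hit_paths x i j" "finite F" "s = sum (path_prob w) F" by auto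
    define N where "N = Max (length ` F)"
    have "F \<subseteq> hit_paths x i j \<inter> {p. length p \<le> N}" using F by (auto simp: N_def)
    moreover have "finite (hit_paths x i j \<inter> {p. length p \<le> N})"
    proof -
      have "finite {p :: 'v list. set p \<subseteq> UNIV \<and> length p \<le> N}" by (rule finite_lists_length_le) simp
      then show ?thesis by (auto intro: finite_subset)
    qed
    ultimately have "sum (path_prob w) F \<le> sum (path_prob w) (hit_paths x i j \<inter> {p. length p \<le> N})"
      by (intro sum_mono2) (auto simp: pp_nonneg)
    then show "s \<le> 1" using hit_bound[of x N] F by simp
  qed
qed (simp add: pp_nonneg)

lemma sig_orth: "orthogonal_matrix (path_signature \<sigma> p)"
proof (induction p rule: induct_list012)
  case (3 x y zs)
  have "orthogonal_matrix (\<sigma> x y)" using cg unfolding connection_graph_def by blast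
  then show ?case using 3(2) by (simp add: orthogonal_matrix_mul)
qed (simp_all add: orthogonal_matrix_id)

lemma orth_norm_le: "orthogonal_matrix (A :: real^'d^'d) \<Longrightarrow> norm A \<le> real CARD('d)"
proof -
  assume "orthogonal_matrix A"
  then have "\<forall>k. norm (row k A) = 1" by (simp add: orthogonal_matrix_orthonormal_rows)
  then have "\<forall>k. norm (A $ k) = 1" by (simp add: row_def)
  moreover have "norm A \<le> (\<Sum>k\<in>UNIV. norm (A $ k))" by (simp add: norm_vec_def L2_set_le_sum)
  ultimately show ?thesis by simp
qed

lemma mat_summable: "(\<lambda>p. path_prob w p *\<^sub>R path_signature \<sigma> p) summable_on hit_paths x i j"
proof (rule abs_summable_summable)
  have "(\<lambda>p. path_prob w p * real CARD('d)) summable_on hit_paths x i j"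
    using pp_summable by (rule summable_on_cmult_left)
  then show "(\<lambda>p. norm (path_prob w p *\<^sub>R path_signature \<sigma> p)) summable_on hit_paths x i j"
  proof (rule summable_on_comparison_test)
    fix p
    show "norm (path_prob w p *\<^sub>R path_signature \<sigma> p) \<le> path_prob w p * real CARD('d)"
      using orth_norm_le[OF sig_orth[of p]] pp_nonneg[of p] by (simp add: mult_left_mono)
  qed simp
qed

end


lemma orth_norm_vec: "orthogonal_matrix (A :: real^'n^'n) \<Longrightarrow> norm (A *v v) = norm v"
proof -
  assume "orthogonal_matrix A"
  then have "orthogonal_transformation (\<lambda>x. A *v x)"
    by (simp add: orthogonal_transformation_matrix)
  then show ?thesis by (rule orthogonal_transformation_norm)
qed

lemma matmul_scaleR: "(A :: real^'n^'m) ** (c *\<^sub>R B) = c *\<^sub>R (A ** (B :: real^'k^'n))"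
  by (simp add: vec_eq_iff matrix_matrix_mult_def sum_distrib_left algebra_simps)

lemma bl_mat: "bounded_linear (\<lambda>M. c *\<^sub>R ((A :: real^'n^'n) ** (M :: real^'n^'n)))"
proof -
  have "linear (\<lambda>M. c *\<^sub>R ((A :: real^'n^'n) ** (M :: real^'n^'n)))"
    by (rule linearI) (simp_all add: matrix_add_ldistrib matmul_scaleR scaleR_add_right)
  then show ?thesis by (simp add: linear_conv_bounded_linear)
qed

context
  fixes w :: "'v::finite \<Rightarrow> 'v \<Rightarrow> real" and \<sigma> :: "'v \<Rightarrow> 'v \<Rightarrow> real^'d::finite^'d" and i j :: 'v
  assumes cg: "connection_graph w \<sigma>" and ij: "i \<noteq> j"
begin

definition "UU x = infsum (\<lambda>p. path_prob w p *\<^sub>R path_signature \<sigma> p) (hit_paths x i j)"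

lemma UU_i: "UU i = mat 1"
  by (simp add: UU_def hit_paths_i)

lemma UU_j: "UU j = 0"
  by (simp add: UU_def hit_paths_j[OF ij])

lemma UU_step:
  assumes "x \<noteq> i" "x \<noteq> j"
  shows "UU x = (\<Sum>y\<in>UNIV. trans_prob w x y *\<^sub>R (\<sigma> x y ** UU y))"
proof -
  let ?f = "\<lambda>p. path_prob w p *\<^sub>R path_signature \<sigma> p"
  have "(?f has_sum (trans_prob w x y *\<^sub>R (\<sigma> x y ** UU y))) ((#) x ` hit_paths y i j)" for y
  proof -
    have "(?f has_sum UU y) (hit_paths y i j)"
      unfolding UU_def using mat_summable[OF cg ij] by (rule has_sum_infsum)
    then have "((\<lambda>p. trans_prob w x y *\<^sub>R (\<sigma> x y ** ?f p)) has_sum (trans_prob w x y *\<^sub>R (\<sigma> x y ** UU y))) (hit_paths y i j)"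
      by (rule has_sum_bounded_linear[OF bl_mat])
    then have "((?f \<circ> (#) x) has_sum (trans_prob w x y *\<^sub>R (\<sigma> x y ** UU y))) (hit_paths y i j)"
    proof (rule has_sum_cong[THEN iffD1, rotated])
      fix q assume "q \<in> hit_paths y i j"
      then show "trans_prob w x y *\<^sub>R (\<sigma> x y ** ?f q) = (?f \<circ> (#) x) q"
        by (simp add: path_prob_cons path_sig_cons matmul_scaleR)
    qed
    then show ?thesis by (subst has_sum_reindex) auto
  qed
  then have "(?f has_sum (\<Sum>y\<in>UNIV. trans_prob w x y *\<^sub>R (\<sigma> x y ** UU y))) (\<Union>y\<in>UNIV. (#) x ` hit_paths y i j)"
    by (intro sum_has_sum) (auto simp: hit_paths_def)
  then have "(?f has_sum (\<Sum>y\<in>UNIV. trans_prob w x y *\<^sub>R (\<sigma> x y ** UU y))) (hit_paths x i j)"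
    using hit_paths_decomp[OF assms] by simp
  then show ?thesis unfolding UU_def by (rule infsumI)
qed

lemma max_principle:
  fixes f :: "'v \<Rightarrow> real^'d"
  assumes fi: "f i = 0" and fj: "f j = 0"
    and fh: "\<And>x. x \<noteq> i \<Longrightarrow> x \<noteq> j \<Longrightarrow> f x = (\<Sum>y\<in>UNIV. trans_prob w x y *\<^sub>R (\<sigma> x y *v f y))"
  shows "f x = 0"
proof (rule ccontr)
  assume nz: "f x \<noteq> 0"
  define M where "M = Max (range (\<lambda>x. norm (f x)))"
  have le: "norm (f y) \<le> M" for y unfolding M_def by (rule Max_ge) auto
  have "M \<in> range (\<lambda>x. norm (f x))" unfolding M_def by (rule Max_in) auto
  then obtain x0 where x0: "norm (f x0) = M" by auto
  have Mpos: "M > 0" using le[of x] nz using zero_less_norm_iff[of "f x"] by linarith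
  have stepM: "norm (f z) = M" if y: "norm (f y) = M" and wz: "w y z > 0" for y z
  proof (rule ccontr)
    assume ne: "norm (f z) \<noteq> M"
    have yi: "y \<noteq> i" "y \<noteq> j" using y fi fj Mpos by auto
    have "M = norm (\<Sum>u\<in>UNIV. trans_prob w y u *\<^sub>R (\<sigma> y u *v f u))" using y fh[OF yi] by simp
    also have "\<dots> \<le> (\<Sum>u\<in>UNIV. norm (trans_prob w y u *\<^sub>R (\<sigma> y u *v f u)))" by (rule norm_sum)
    also have "\<dots> = (\<Sum>u\<in>UNIV. trans_prob w y u * norm (f u))"
    proof (rule sum.cong)
      fix u
      have "orthogonal_matrix (\<sigma> y u)" using cg unfolding connection_graph_def by blast
      then show "norm (trans_prob w y u *\<^sub>R (\<sigma> y u *v f u)) = trans_prob w y u * norm (f u)"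
        using tp_nonneg[OF cg ij, of y u] by (simp add: orth_norm_vec)
    qed simp
    also have "\<dots> < (\<Sum>u\<in>UNIV. trans_prob w y u * M)"
    proof (rule sum_strict_mono_ex1)
      show "\<forall>u\<in>UNIV. trans_prob w y u * norm (f u) \<le> trans_prob w y u * M"
        using le tp_nonneg[OF cg ij] by (simp add: mult_left_mono)
      have "trans_prob w y z > 0" using wz deg_pos[OF cg ij, of y] by (simp add: trans_prob_def)
      moreover have "norm (f z) < M" using le[of z] ne by simp
      ultimately have "trans_prob w y z * norm (f z) < trans_prob w y z * M" by simp
      then show "\<exists>u\<in>UNIV. trans_prob w y u * norm (f u) < trans_prob w y u * M" by blast
    qed simp
    also have "\<dots> = M" using tp_sum[OF cg ij, of y] by (simp add: sum_distrib_right[symmetric])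
    finally show False by simp
  qed
  have "(x0, i) \<in> {(x, y). w x y > 0}\<^sup>*" using cg by (simp add: connection_graph_def)
  then have "norm (f i) = M"
    by (induction rule: rtrancl_induct) (use x0 stepM in auto)
  then show False using fi Mpos by simp
qed

end


lemma mv_scaleR: "(c *\<^sub>R (M :: real^'n^'m)) *v e = c *\<^sub>R (M *v e)"
  by (simp add: vec_eq_iff matrix_vector_mult_def sum_distrib_left algebra_simps)

lemma mv_sum: "finite A \<Longrightarrow> (sum g A :: real^'n^'m) *v e = (\<Sum>y\<in>A. g y *v e)"
  by (induction A rule: finite_induct) (simp_all add: matrix_vector_mult_add_rdistrib)

lemma mm_diff: "(A :: real^'n^'m) ** (B - C) = A ** B - A ** (C :: real^'k^'n)"
  by (simp add: vec_eq_iff matrix_matrix_mult_def sum_subtractf algebra_simps)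

theorem theorem5p8:
  fixes w :: "'v::finite \<Rightarrow> 'v \<Rightarrow> real"
    and \<sigma> :: "'v \<Rightarrow> 'v \<Rightarrow> real^'d::finite^'d"
    and V :: "'v \<Rightarrow> real^'d^'d"
    and i j :: 'v
  assumes "connection_graph w \<sigma>"
    and "i \<noteq> j"
    and "\<And>x. x \<noteq> i \<Longrightarrow> x \<noteq> j \<Longrightarrow> conn_laplacian w \<sigma> V x = 0"
    and "V i = mat 1"
    and "V j = 0"
  shows "\<forall>x. V x = hit_prob w x i j *\<^sub>R cond_mean_signature w \<sigma> x i j"
proof
  note cg = assms(1) and ij = assms(2)
  let ?U = "UU w \<sigma> i j"
  have Vstep: "V x = (\<Sum>y\<in>UNIV. trans_prob w x y *\<^sub>R (\<sigma> x y ** V y))" if "x \<noteq> i" "x \<noteq> j" for x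
  proof -
    have "0 = (\<Sum>y\<in>UNIV. w x y *\<^sub>R (V x - \<sigma> x y ** V y))"
      using assms(3)[OF that] by (simp add: conn_laplacian_def)
    also have "\<dots> = deg w x *\<^sub>R V x - (\<Sum>y\<in>UNIV. w x y *\<^sub>R (\<sigma> x y ** V y))"
      by (simp add: scaleR_diff_right sum_subtractf deg_def scaleR_sum_left)
    finally have "deg w x *\<^sub>R V x = (\<Sum>y\<in>UNIV. w x y *\<^sub>R (\<sigma> x y ** V y))" by simp
    moreover have "V x = (1 / deg w x) *\<^sub>R (deg w x *\<^sub>R V x)"
      using deg_pos[OF cg ij, of x] by simp
    ultimately have "V x = (1 / deg w x) *\<^sub>R (\<Sum>y\<in>UNIV. w x y *\<^sub>R (\<sigma> x y ** V y))"
      by simp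
    also have "\<dots> = (\<Sum>y\<in>UNIV. trans_prob w x y *\<^sub>R (\<sigma> x y ** V y))"
      by (simp add: scaleR_sum_right trans_prob_def)
    finally show ?thesis .
  qed
  have VU: "V x = ?U x" for x
  proof -
    have "(V x - ?U x) *v e = 0" for e
    proof (rule max_principle[OF cg ij, where f = "\<lambda>x. (V x - ?U x) *v e"])
      show "(V i - ?U i) *v e = 0" using assms(4) UU_i[OF cg ij] by simp
      show "(V j - ?U j) *v e = 0" using assms(5) UU_j[OF cg ij] by simp
      fix x assume x: "x \<noteq> i" "x \<noteq> j"
      have "V x - ?U x = (\<Sum>y\<in>UNIV. trans_prob w x y *\<^sub>R (\<sigma> x y ** (V y - ?U y)))"
        using Vstep[OF x] UU_step[OF cg ij x]
        by (simp add: mm_diff scaleR_diff_right sum_subtractf)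
      then have "(V x - ?U x) *v e = (\<Sum>y\<in>UNIV. (trans_prob w x y *\<^sub>R (\<sigma> x y ** (V y - ?U y))) *v e)"
        by (simp add: mv_sum)
      also have "\<dots> = (\<Sum>y\<in>UNIV. trans_prob w x y *\<^sub>R (\<sigma> x y *v ((V y - ?U y) *v e)))"
        by (simp add: mv_scaleR matrix_vector_mul_assoc)
      finally show "(V x - ?U x) *v e = (\<Sum>y\<in>UNIV. trans_prob w x y *\<^sub>R (\<sigma> x y *v ((V y - ?U y) *v e)))" .
    qed
    then have "V x - ?U x = 0" by (simp add: matrix_eq)
    then show ?thesis by simp
  qed
  fix x
  show "V x = hit_prob w x i j *\<^sub>R cond_mean_signature w \<sigma> x i j"
  proof (cases "hit_prob w x i j = 0")
    case False
    then show ?thesis unfolding cond_mean_signature_def VU UU_def[OF cg ij] by simp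
  next
    case True
    have "path_prob w p = 0" if "p \<in> hit_paths x i j" for p
      using True that pp_summable[OF cg ij, of x] pp_nonneg[OF cg ij]
      by (intro nonneg_infsum_le_0D[where A = "hit_paths x i j"]) (auto simp: hit_prob_def)
    then have "?U x = 0" unfolding UU_def[OF cg ij] by (intro infsum_0) simp
    then show ?thesis using True VU by simp
  qed
qed

end
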